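(* Let $G=(V,E)$ be an undirected graph (finite or infinite) and let $X,Y$ be two ``strong'' partitive sets of $G$ with $X\cap Y=\emptyset$. Then there is at most one color class $\widehat A$ of $G$ containing an edge $(x,y)$ with $x\in X$ and $y\in Y$.
   Context: A graph $G=(V,E)$ has vertex set $V$ and edge set $E\subseteq V^2$; it is undirected if $E$ is irreflexive and symmetric. A set $X\subseteq V$ is a partitive set of $G$ if for all $a,b\in X$ and $c\in V\setminus X$: $(a,c)\in E\Leftrightarrow(b,c)\in E$ and $(c,a)\in E\Leftrightarrow(c,b)\in E$; $I(G)$ is the class of partitive sets. A ``strong'' partitive set is an $X\in I(G)$ such that for every $Y\in I(G)$ with $X\cap Y\neq\emptyset$, $X\subseteq Y$ or $Y\subseteq X$. Implication classes: on $E$ define $(a,b)\Gamma(a',b')$ iff either $a=a'$ and $(b,b')\notin E$, or $b=b'$ and $(a,a')\notin E$; the classes of the transitive closure $\Gamma^*$ are the implication classes. For an implication class $A$, $A^{-1}=\{(b,a):(a,b)\in A\}$ and the color class is $\widehat A=A\cup A^{-1}$. *)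

theory Defs
  imports Main
begin

definition undirected_graph :: "'a set \<Rightarrow> ('a \<times> 'a) set \<Rightarrow> bool" where
  "undirected_graph V E \<longleftrightarrow> E \<subseteq> V \<times> V \<and> irrefl E \<and> sym E"

definition partitive :: "'a set \<Rightarrow> ('a \<times> 'a) set \<Rightarrow> 'a set \<Rightarrow> bool" where
  "partitive V E X \<longleftrightarrow> X \<subseteq> V \<and>
     (\<forall>a\<in>X. \<forall>b\<in>X. \<forall>c\<in>V - X.
        ((a, c) \<in> E \<longleftrightarrow> (b, c) \<in> E) \<and> ((c, a) \<in> E \<longleftrightarrow> (c, b) \<in> E))"

definition strong_partitive :: "'a set \<Rightarrow> ('a \<times> 'a) set \<Rightarrow> 'a set \<Rightarrow> bool" where
  "strong_partitive V E X \<longleftrightarrow> partitive V E X \<and>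
     (\<forall>Y. partitive V E Y \<longrightarrow> X \<inter> Y \<noteq> {} \<longrightarrow> X \<subseteq> Y \<or> Y \<subseteq> X)"

definition Gamma :: "('a \<times> 'a) set \<Rightarrow> (('a \<times> 'a) \<times> ('a \<times> 'a)) set" where
  "Gamma E = {((a, b), (a', b')). (a, b) \<in> E \<and> (a', b') \<in> E \<and>
     ((a = a' \<and> (b, b') \<notin> E) \<or> (b = b' \<and> (a, a') \<notin> E))}"

definition implication_class :: "('a \<times> 'a) set \<Rightarrow> ('a \<times> 'a) set \<Rightarrow> bool" where
  "implication_class E A \<longleftrightarrow> A \<in> E // (Gamma E)\<^sup>+"

definition color_class :: "('a \<times> 'a) set \<Rightarrow> ('a \<times> 'a) set" where
  "color_class A = A \<union> A\<inverse>"

end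

theory Submission
  imports Defs
begin

lemma Gamma_sub: "Gamma E \<subseteq> E \<times> E"
  unfolding Gamma_def by auto

lemma Gamma_refl: "irrefl E \<Longrightarrow> p \<in> E \<Longrightarrow> (p, p) \<in> Gamma E"
  unfolding Gamma_def irrefl_def by (cases p) auto

lemma Gamma_sym: "sym E \<Longrightarrow> sym (Gamma E)"
  unfolding Gamma_def sym_def by auto

lemma Gamma_swap: "sym E \<Longrightarrow> ((a,b),(c,d)) \<in> Gamma E \<Longrightarrow> ((b,a),(d,c)) \<in> Gamma E"
  unfolding Gamma_def sym_def by auto

lemma T_swap:
  assumes "sym E" "(p, q) \<in> (Gamma E)\<^sup>+"
  shows "(prod.swap p, prod.swap q) \<in> (Gamma E)\<^sup>+"
  using assms(2)
proof (induction rule: trancl_induct)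
  case (base y)
  then show ?case using Gamma_swap[OF assms(1)]
    by (metis prod.collapse swap_simp r_into_trancl)
next
  case (step y z)
  then show ?case using Gamma_swap[OF assms(1)]
    by (metis prod.collapse swap_simp trancl.trancl_into_trancl)
qed

lemma T_equiv:
  assumes "irrefl E" "sym E"
  shows "equiv E ((Gamma E)\<^sup>+)"
proof (rule equivI)
  show "(Gamma E)\<^sup>+ \<subseteq> E \<times> E" using Gamma_sub
    by (metis trancl_subset_Sigma)
  show "refl_on E ((Gamma E)\<^sup>+)"
  proof (rule refl_onI)
    fix p assume "p \<in> E" thus "(p,p) \<in> (Gamma E)\<^sup>+" using Gamma_refl[OF assms(1)] by blast
  qed
  show "sym ((Gamma E)\<^sup>+)" using Gamma_sym[OF assms(2)] by (rule sym_trancl)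
  show "trans ((Gamma E)\<^sup>+)" by (rule trans_trancl)
qed

lemma core:
  assumes ug: "undirected_graph V E" and sX: "strong_partitive V E X"
    and xX: "x \<in> X" and x'X: "x' \<in> X" and yV: "y \<in> V" and yX: "y \<notin> X" and xy: "(x, y) \<in> E"
  shows "((x, y), (x', y)) \<in> (Gamma E)\<^sup>+"
proof (rule ccontr)
  assume contra: "((x, y), (x', y)) \<notin> (Gamma E)\<^sup>+"
  define T where "T = (Gamma E)\<^sup>+"
  have EV: "E \<subseteq> V \<times> V" and irr: "irrefl E" and sy: "sym E" using ug unfolding undirected_graph_def by auto
  have pX: "partitive V E X" using sX unfolding strong_partitive_def by auto
  have XV: "X \<subseteq> V" using pX unfolding partitive_def by auto
  have modX: "\<And>a b c. a \<in> X \<Longrightarrow> b \<in> X \<Longrightarrow> c \<in> V \<Longrightarrow> c \<notin> X \<Longrightarrow> (a, c) \<in> E \<longleftrightarrow> (b, c) \<in> E"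
    using pX unfolding partitive_def by blast
  have syE: "\<And>a b. (a,b) \<in> E \<Longrightarrow> (b,a) \<in> E" using sy unfolding sym_def by blast
  have irrE: "\<And>a. (a,a) \<notin> E" using irr unfolding irrefl_def by blast
  have Tsym: "\<And>p q. (p,q) \<in> T \<Longrightarrow> (q,p) \<in> T"
    unfolding T_def using sym_trancl[OF Gamma_sym[OF sy]] unfolding sym_def by blast
  have Ttr: "\<And>p q r. (p,q) \<in> T \<Longrightarrow> (q,r) \<in> T \<Longrightarrow> (p,r) \<in> T"
    unfolding T_def by (meson trancl_trans)
  have RT: "\<And>p q. (p,q) \<in> Gamma E \<Longrightarrow> (p,q) \<in> T" unfolding T_def by blast
  have G1: "\<And>a b b'. (a,b) \<in> E \<Longrightarrow> (a,b') \<in> E \<Longrightarrow> (b,b') \<notin> E \<Longrightarrow> ((a,b),(a,b')) \<in> Gamma E"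
    unfolding Gamma_def by auto
  have G2: "\<And>a a' b. (a,b) \<in> E \<Longrightarrow> (a',b) \<in> E \<Longrightarrow> (a,a') \<notin> E \<Longrightarrow> ((a,b),(a',b)) \<in> Gamma E"
    unfolding Gamma_def by auto
  define N where "N = {v \<in> V - X. (x, v) \<in> E}"
  have NE: "\<And>z v. z \<in> X \<Longrightarrow> v \<in> N \<Longrightarrow> (z, v) \<in> E"
    using modX xX unfolding N_def by blast
  define Nc where "Nc = {(a, b). a \<in> N \<and> b \<in> N \<and> (a, b) \<notin> E}"
  define K where "K = {v. (y, v) \<in> Nc\<^sup>*}"
  have yN: "y \<in> N" unfolding N_def using yV yX xy by auto
  have KN: "K \<subseteq> N"
  proof
    fix v assume "v \<in> K"
    hence "(y, v) \<in> Nc\<^sup>*" unfolding K_def by auto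
    thus "v \<in> N" using yN by (induction rule: rtrancl_induct) (auto simp: Nc_def)
  qed
  have chain: "\<And>z v. z \<in> X \<Longrightarrow> v \<in> K \<Longrightarrow> ((z, y), (z, v)) \<in> T"
  proof -
    fix z v assume zX: "z \<in> X" and vK: "v \<in> K"
    hence "(y, v) \<in> Nc\<^sup>*" unfolding K_def by auto
    thus "((z, y), (z, v)) \<in> T"
    proof (induction rule: rtrancl_induct)
      case base
      then show ?case using RT Gamma_refl[OF irr] NE[OF zX yN] by blast
    next
      case (step v w)
      then have "((z, v), (z, w)) \<in> Gamma E" using G1 NE zX unfolding Nc_def by auto
      then show ?case using step Ttr RT by metis
    qed
  qed
  define X1 where "X1 = {z \<in> X. ((x, y), (z, y)) \<in> T}"
  define M where "M = X1 \<union> K"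
  have x'X1: "x' \<notin> X1" using contra unfolding X1_def T_def by auto
  have xX1: "x \<in> X1" unfolding X1_def using xX RT Gamma_refl[OF irr] xy by blast
  have yK: "y \<in> K" unfolding K_def by auto
  have MV: "M \<subseteq> V" unfolding M_def X1_def using XV KN unfolding N_def by auto
  have key: "\<And>a c. a \<in> M \<Longrightarrow> c \<in> V \<Longrightarrow> c \<notin> M \<Longrightarrow> (a, c) \<in> E \<longleftrightarrow> (c \<in> X \<or> c \<in> N)"
  proof -
    fix a c assume aM: "a \<in> M" and cV: "c \<in> V" and cM: "c \<notin> M"
    show "(a, c) \<in> E \<longleftrightarrow> (c \<in> X \<or> c \<in> N)"
    proof (cases "a \<in> X1")
      case True
      hence aX: "a \<in> X" unfolding X1_def by auto
      show ?thesis
      proof (cases "c \<in> X")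
        case True
        have "c \<notin> X1" using cM unfolding M_def by auto
        have "(a, c) \<in> E"
        proof (rule ccontr)
          assume "(a, c) \<notin> E"
          hence "((a, y), (c, y)) \<in> Gamma E"
            using G2 NE[OF aX yN] NE[OF True yN] by blast
          moreover have "((x, y), (a, y)) \<in> T" using \<open>a \<in> X1\<close> unfolding X1_def by blast
          ultimately have "((x, y), (c, y)) \<in> T" using Ttr RT by metis
          hence "c \<in> X1" using True unfolding X1_def by blast
          thus False using \<open>c \<notin> X1\<close> by blast
        qed
        thus ?thesis using True by auto
      next
        case False
        show ?thesis
        proof (cases "c \<in> N")
          case True then show ?thesis using NE aX by auto
        next
          case cN: False
          hence "(x, c) \<notin> E" using cV False unfolding N_def by auto
          hence "(a, c) \<notin> E" using modX[OF aX xX cV False] by auto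
          thus ?thesis using False cN by auto
        qed
      qed
    next
      case False
      hence aK: "a \<in> K" using aM unfolding M_def by auto
      hence aN: "a \<in> N" using KN by auto
      show ?thesis
      proof (cases "c \<in> X")
        case True
        have "(a, c) \<in> E" using syE[OF NE[OF True aN]] .
        thus ?thesis using True by simp
      next
        case cX: False
        show ?thesis
        proof (cases "c \<in> N")
          case True
          have "c \<notin> K" using cM unfolding M_def by auto
          have "(a, c) \<in> E"
          proof (rule ccontr)
            assume "(a, c) \<notin> E"
            hence "(a, c) \<in> Nc" using aN True unfolding Nc_def by auto
            moreover have "(y, a) \<in> Nc\<^sup>*" using aK unfolding K_def by simp
            ultimately have "(y, c) \<in> Nc\<^sup>*" by (simp add: rtrancl.rtrancl_into_rtrancl)
            hence "c \<in> K" unfolding K_def by simp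
            thus False using \<open>c \<notin> K\<close> by blast
          qed
          thus ?thesis using True by auto
        next
          case cN: False
          have xc: "(x, c) \<notin> E" using cV cX cN unfolding N_def by auto
          have x'c: "(x', c) \<notin> E" using xc modX[OF xX x'X cV cX] by auto
          have "(a, c) \<notin> E"
          proof
            assume ac: "(a, c) \<in> E"
            hence ca: "(c, a) \<in> E" by (rule syE)
            have "((x, a), (c, a)) \<in> Gamma E" using G2[OF NE[OF xX aN] ca xc] .
            moreover have "((c, a), (x', a)) \<in> Gamma E"
            proof -
              have "(c, x') \<notin> E" using x'c syE by metis
              thus ?thesis using G2[OF ca NE[OF x'X aN]] by simp
            qed
            ultimately have "((x, a), (x', a)) \<in> T" using RT Ttr by metis
            moreover have "((x, y), (x, a)) \<in> T" using chain[OF xX aK] .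
            moreover have "((x', a), (x', y)) \<in> T" using Tsym[OF chain[OF x'X aK]] .
            ultimately have "((x, y), (x', y)) \<in> T" using Ttr by metis
            thus False using contra unfolding T_def by blast
          qed
          thus ?thesis using cX cN by auto
        qed
      qed
    qed
  qed
  have pM: "partitive V E M"
    unfolding partitive_def
  proof (rule conjI[OF MV], intro ballI)
    fix a b c assume aM: "a \<in> M" and bM: "b \<in> M" and c: "c \<in> V - M"
    have 1: "(a, c) \<in> E \<longleftrightarrow> (b, c) \<in> E" using key[OF aM] key[OF bM] c by simp
    have 2: "(c, a) \<in> E \<longleftrightarrow> (c, b) \<in> E" using 1 syE by metis
    show "((a, c) \<in> E) = ((b, c) \<in> E) \<and> ((c, a) \<in> E) = ((c, b) \<in> E)" using 1 2 by simp
  qed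
  have "X \<inter> M \<noteq> {}" using xX1 xX unfolding M_def by auto
  hence "X \<subseteq> M \<or> M \<subseteq> X" using sX pM unfolding strong_partitive_def by blast
  moreover have "\<not> X \<subseteq> M" using x'X x'X1 KN unfolding M_def N_def by auto
  moreover have "\<not> M \<subseteq> X" using yK yX unfolding M_def by auto
  ultimately show False by blast
qed

lemma cc_eq:
  assumes "irrefl E" "sym E" "implication_class E A" "p \<in> color_class A"
  shows "color_class A = (Gamma E)\<^sup>+ `` {p} \<union> ((Gamma E)\<^sup>+ `` {p})\<inverse>"
proof -
  define T where "T = (Gamma E)\<^sup>+"
  have eq: "equiv E T" unfolding T_def using T_equiv assms by blast
  obtain e where eE: "e \<in> E" and A: "A = T `` {e}"
    using assms(3) unfolding implication_class_def T_def by (auto elim: quotientE)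
  have inv: "\<And>r. (T `` {r})\<inverse> = T `` {prod.swap r}"
  proof -
    fix r
    show "(T `` {r})\<inverse> = T `` {prod.swap r}"
    proof (intro set_eqI iffI)
      fix q assume "q \<in> (T `` {r})\<inverse>"
      then obtain a b where q: "q = (a,b)" "(r, (b,a)) \<in> T" by auto
      then show "q \<in> T `` {prod.swap r}" using T_swap[OF assms(2), of r "(b,a)"] unfolding T_def by auto
    next
      fix q assume "q \<in> T `` {prod.swap r}"
      then obtain a b where q: "q = (a,b)" "(prod.swap r, (a,b)) \<in> T" by (cases q) auto
      then have "(r, (b,a)) \<in> T" using T_swap[OF assms(2), of "prod.swap r" "(a,b)"] unfolding T_def by auto
      then show "q \<in> (T `` {r})\<inverse>" using q by auto
    qed
  qed
  have "p \<in> T `` {e} \<or> prod.swap p \<in> T `` {e}"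
    using assms(4) unfolding color_class_def A by (cases p) auto
  then show ?thesis
  proof
    assume "p \<in> T `` {e}"
    hence "T `` {p} = T `` {e}" using eq by (metis Image_singleton_iff equiv_class_eq_iff)
    thus ?thesis unfolding color_class_def A T_def by simp
  next
    assume "prod.swap p \<in> T `` {e}"
    hence "T `` {prod.swap p} = T `` {e}" using eq by (metis Image_singleton_iff equiv_class_eq_iff)
    moreover have "(T `` {p})\<inverse> = T `` {prod.swap p}" using inv by simp
    moreover have "(T `` {prod.swap p})\<inverse> = T `` {p}" using inv[of "prod.swap p"] by simp
    ultimately show ?thesis unfolding color_class_def A T_def by auto
  qed
qed

theorem theorem3p4:
  fixes V :: "'a set" and E :: "('a \<times> 'a) set" and X Y :: "'a set"
  assumes "undirected_graph V E"
    and "strong_partitive V E X" and "strong_partitive V E Y"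
    and "X \<inter> Y = {}"
  shows "
    \<forall>A B. implication_class E A \<longrightarrow> implication_class E B \<longrightarrow>
      (\<exists>x\<in>X. \<exists>y\<in>Y. (x, y) \<in> color_class A) \<longrightarrow>
      (\<exists>x\<in>X. \<exists>y\<in>Y. (x, y) \<in> color_class B) \<longrightarrow>
      color_class A = color_class B"
proof (intro allI impI)
  fix A B
  assume iA: "implication_class E A" and iB: "implication_class E B"
    and "\<exists>x\<in>X. \<exists>y\<in>Y. (x, y) \<in> color_class A" "\<exists>x\<in>X. \<exists>y\<in>Y. (x, y) \<in> color_class B"
  then obtain x y x' y' where xX: "x \<in> X" and yY: "y \<in> Y" and pA: "(x, y) \<in> color_class A"
    and x'X: "x' \<in> X" and y'Y: "y' \<in> Y" and pB: "(x', y') \<in> color_class B" by blast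
  have EV: "E \<subseteq> V \<times> V" and irr: "irrefl E" and sy: "sym E" using assms(1) unfolding undirected_graph_def by auto
  have syE: "\<And>a b. (a,b) \<in> E \<Longrightarrow> (b,a) \<in> E" using sy unfolding sym_def by blast
  have AE: "A \<subseteq> E" using iA T_equiv[OF irr sy] unfolding implication_class_def
    by (metis Union_upper Union_quotient)
  have BE: "B \<subseteq> E" using iB T_equiv[OF irr sy] unfolding implication_class_def
    by (metis Union_upper Union_quotient)
  have xyE: "(x, y) \<in> E" using pA AE syE unfolding color_class_def by blast
  have x'y'E: "(x', y') \<in> E" using pB BE syE unfolding color_class_def by blast
  have pY: "partitive V E Y" using assms(3) unfolding strong_partitive_def by auto
  have pX: "partitive V E X" using assms(2) unfolding strong_partitive_def by auto
  have xV: "x \<in> V" and y'V: "y' \<in> V" using xyE x'y'E EV by auto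
  have xY: "x \<notin> Y" and y'X: "y' \<notin> X" using xX y'Y assms(4) by auto
  have yxE: "(y, x) \<in> E" using syE xyE .
  have 1: "((x', y'), (x, y')) \<in> (Gamma E)\<^sup>+"
    using core[OF assms(1) assms(2) x'X xX y'V y'X x'y'E] .
  have 2: "((y, x), (y', x)) \<in> (Gamma E)\<^sup>+"
    using core[OF assms(1) assms(3) yY y'Y xV xY yxE] .
  have 3: "((x, y), (x, y')) \<in> (Gamma E)\<^sup>+" using T_swap[OF sy 2] by simp
  have 4: "((x, y), (x', y')) \<in> (Gamma E)\<^sup>+"
    using 1 3 sym_trancl[OF Gamma_sym[OF sy]] unfolding sym_def by (meson trancl_trans)
  have "(Gamma E)\<^sup>+ `` {(x, y)} = (Gamma E)\<^sup>+ `` {(x', y')}"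
    using 4 T_equiv[OF irr sy] by (metis equiv_class_eq)
  thus "color_class A = color_class B"
    using cc_eq[OF irr sy iA pA] cc_eq[OF irr sy iB pB] by simp
qed

end
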